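(* Let $k\ge2$ be an integer and $n\ge1$ a natural number. Then $(L_k^{(1)})^n=L_k^{(n)}\,(L_k^{(0)})^{n-1}$.
   Context: Fix an integer $k\ge2$. Let $Q_k$ be the $k\times k$ matrix whose first row is all ones, with $(Q_k)_{i+1,i}=1$ for $1\le i\le k-1$ and all other entries $0$, and for $r\in\mathbb Z$ let $Q_k^r$ denote its $r$-th power. The generalized Lucas sequence of order $k$, $(l_{k,n})_{n\in\mathbb Z}$, is the two-sided sequence satisfying $l_{k,n+k}=l_{k,n+k-1}+\dots+l_{k,n}$ for all $n\in\mathbb Z$ with initial values $l_{k,r}=\operatorname{trace}(Q_k^r)$ for $0\le r\le k-1$ (so $l_{k,0}=k$ and $l_{k,r}=2^r-1$ for $1\le r\le k-1$). For $n\in\mathbb Z$ the generalized Lucas matrix $L_k^{(n)}$ is the $k\times k$ matrix with entries $(L_k^{(n)})_{i,1}=l_{k,k+n-i}$ and $(L_k^{(n)})_{i,j}=\sum_{m=n-i+j-1}^{k+n-i-1} l_{k,m}$ for $2\le j\le k$, $1\le i\le k$. *)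

theory Defs
  imports "Jordan_Normal_Form.Matrix"
begin

definition Qmat :: "nat \<Rightarrow> int mat" where
  "Qmat k = mat k k (\<lambda>(i, j). if i = 0 then 1 else if i = j + 1 then 1 else 0)"

definition mat_trace :: "int mat \<Rightarrow> int" where
  "mat_trace A = (\<Sum>i<dim_row A. A $$ (i, i))"

definition gen_lucas :: "nat \<Rightarrow> int \<Rightarrow> int" where
  "gen_lucas k = (THE f. (\<forall>n::int. f (n + int k) = (\<Sum>j<k. f (n + int j))) \<and>
                        (\<forall>r<k. f (int r) = mat_trace (Qmat k ^\<^sub>m r)))"

text \<open>The generalized Lucas matrix L_k^(n), written with 0-based indices
  (paper's row i, column j correspond to i+1, j+1 here).\<close>
definition lucas_mat :: "nat \<Rightarrow> int \<Rightarrow> int mat" where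
  "lucas_mat k n = mat k k (\<lambda>(i, j).
     if j = 0 then gen_lucas k (int k + n - int i - 1)
     else (\<Sum>m \<in> {n - int i + int j - 1 .. int k + n - int i - 2}. gen_lucas k m))"

end

theory Submission imports Defs begin

function hseq :: "nat \<Rightarrow> (int \<Rightarrow> int) \<Rightarrow> int \<Rightarrow> int" where
  "hseq k c n = (if k = 0 then 0 else if 0 \<le> n \<and> n < int k then c n
     else if n \<ge> int k then (\<Sum>j<k. hseq k c (n - int k + int j))
     else hseq k c (n + int k) - (\<Sum>j\<in>{1..<k}. hseq k c (n + int j)))"
  by pat_completeness auto
termination
  by (relation "measure (\<lambda>(k,c,n). if n < 0 then nat (-n) else if n < int k then 0 else nat n)") auto

declare hseq.simps[simp del]

lemma hseq_init: "r < k \<Longrightarrow> hseq k c (int r) = c (int r)"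
  by (subst hseq.simps) simp

lemma hseq_rec: assumes "k \<ge> 1"
  shows "hseq k c (n + int k) = (\<Sum>j<k. hseq k c (n + int j))"
proof (cases "n \<ge> 0")
  case True
  then show ?thesis using assms by (subst hseq.simps) simp
next
  case False
  have s: "(\<Sum>j<k. hseq k c (n + int j)) = hseq k c n + (\<Sum>j\<in>{1..<k}. hseq k c (n + int j))"
  proof -
    have "{..<k} = insert 0 {1..<k}" using assms by auto
    then show ?thesis by simp
  qed
  have "hseq k c n = hseq k c (n + int k) - (\<Sum>j\<in>{1..<k}. hseq k c (n + int j))"
    using False assms by (subst hseq.simps) simp
  then show ?thesis using s by simp
qed

lemma uniq_rec:
  fixes f g :: "int \<Rightarrow> int"
  assumes k: "k \<ge> 1"
    and rf: "\<forall>n. f (n + int k) = (\<Sum>j<k. f (n + int j))"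
    and rg: "\<forall>n. g (n + int k) = (\<Sum>j<k. g (n + int j))"
    and init: "\<forall>r<k. f (int r) = g (int r)"
  shows "f = g"
proof -
  have pos: "f (int m) = g (int m)" for m
  proof (induction m rule: less_induct)
    case (less m)
    show ?case
    proof (cases "m < k")
      case True then show ?thesis using init by auto
    next
      case False
      have "f (int m) = f ((int m - int k) + int k)" by simp
      also have "\<dots> = (\<Sum>j<k. f (int m - int k + int j))" using rf by blast
      also have "\<dots> = (\<Sum>j<k. g (int m - int k + int j))"
      proof (rule sum.cong)
        fix j assume "j \<in> {..<k}"
        then have "int m - int k + int j = int (m - k + j)" "m - k + j < m" using False k by auto
        then show "f (int m - int k + int j) = g (int m - int k + int j)" using less by metis
      qed simp
      also have "\<dots> = g ((int m - int k) + int k)" using rg by metis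
      finally show ?thesis by simp
    qed
  qed
  have neg: "\<forall>n \<ge> - int d. f n = g n" for d
  proof (induction d)
    case 0 then show ?case using pos by (metis minus_zero of_nat_0 nonneg_int_cases)
  next
    case (Suc d)
    show ?case
    proof (intro allI impI)
      fix n assume n: "n \<ge> - int (Suc d)"
      show "f n = g n"
      proof (cases "n \<ge> - int d")
        case True then show ?thesis using Suc by blast
      next
        case False
        then have nn: "n = - int d - 1" using n by simp
        have ef: "f n = f (n + int k) - (\<Sum>j\<in>{1..<k}. f (n + int j))"
        proof -
          have "{..<k} = insert 0 {1..<k}" using k by auto
          then show ?thesis using rf[rule_format, of n] by simp
        qed
        have eg: "g n = g (n + int k) - (\<Sum>j\<in>{1..<k}. g (n + int j))"
        proof -
          have "{..<k} = insert 0 {1..<k}" using k by auto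
          then show ?thesis using rg[rule_format, of n] by simp
        qed
        have "f (n + int k) = g (n + int k)" using Suc nn k by auto
        moreover have "(\<Sum>j\<in>{1..<k}. f (n + int j)) = (\<Sum>j\<in>{1..<k}. g (n + int j))"
          by (rule sum.cong) (use Suc nn in auto)
        ultimately show ?thesis using ef eg by simp
      qed
    qed
  qed
  show ?thesis
  proof
    fix n
    show "f n = g n" using neg[of "nat (- n)"] by simp
  qed
qed

lemma gen_lucas_rec: assumes "k \<ge> 1"
  shows "gen_lucas k (n + int k) = (\<Sum>j<k. gen_lucas k (n + int j))"
proof -
  let ?P = "\<lambda>f. (\<forall>n::int. f (n + int k) = (\<Sum>j<k. f (n + int j))) \<and>
                        (\<forall>r<k. f (int r) = mat_trace (Qmat k ^\<^sub>m r))"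
  define c where "c = (\<lambda>n::int. mat_trace (Qmat k ^\<^sub>m nat n))"
  have ex: "?P (hseq k c)"
    using hseq_rec[OF assms] assms by (auto simp: c_def hseq_init)
  have "\<exists>!f. ?P f"
  proof (rule ex1I[of _ "hseq k c"])
    show "?P (hseq k c)" by (rule ex)
    fix f assume "?P f" then show "f = hseq k c"
      using uniq_rec[OF assms, of f "hseq k c"] ex by auto
  qed
  then have "?P (gen_lucas k)" unfolding gen_lucas_def by (rule theI')
  then show ?thesis by blast
qed

lemma sum_shift_int: "(\<Sum>m\<in>{a..b::int}. f m) = (\<Sum>m\<in>{a+c..b+c}. f (m - c))"
  by (rule sum.reindex_bij_witness[of _ "\<lambda>m. m - c" "\<lambda>m. m + c"]) auto

lemma sum_top_int: "a \<le> b + 1 \<Longrightarrow> (\<Sum>m\<in>{a..b+1::int}. f m) = (\<Sum>m\<in>{a..b}. f m) + f (b+1)"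
proof -
  assume "a \<le> b + 1"
  then have "{a..b+1} = insert (b+1) {a..b}" by auto
  then show ?thesis by (simp add: add.commute)
qed

lemma sum_bot_int: "a \<le> b + 1 \<Longrightarrow> (\<Sum>m\<in>{a-1..b::int}. f m) = f (a - 1) + (\<Sum>m\<in>{a..b}. f m)"
proof -
  assume "a \<le> b + 1"
  then have "{a-1..b} = insert (a-1) {a..b}" by auto
  then show ?thesis by simp
qed

lemma sum_lessThan_int: "(\<Sum>j<k. f (p + int j)) = (\<Sum>m\<in>{p..p + int k - 1}. f m)"
proof (induction k)
  case 0 then show ?case by simp
next
  case (Suc k)
  have "(\<Sum>j<Suc k. f (p + int j)) = (\<Sum>m\<in>{p..p + int k - 1}. f m) + f (p + int k)"
    using Suc by simp
  also have "\<dots> = (\<Sum>m\<in>{p..p + int (Suc k) - 1}. f m)"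
    using sum_top_int[of p "p + int k - 1" f] by simp
  finally show ?case .
qed

context
  fixes f :: "int \<Rightarrow> int" and k :: nat
  assumes R: "\<And>n. f (n + int k) = (\<Sum>j<k. f (n + int j))"
begin

lemma rec_window: "(\<Sum>m\<in>{p..p + int k - 1}. f m) = f (p + int k)"
  using R[of p] sum_lessThan_int[of f p k] by simp

lemma rec_back: "(\<Sum>l<k. f (m - int l)) = f (m + 1)"
proof -
  have "f (m + 1) = f ((m + 1 - int k) + int k)" by simp
  also have "\<dots> = (\<Sum>j<k. f (m + 1 - int k + int j))" by (rule R)
  also have "\<dots> = (\<Sum>l<k. f (m + 1 - int k + int (k - Suc l)))"
    by (rule sum.nat_diff_reindex[symmetric])
  also have "\<dots> = (\<Sum>l<k. f (m - int l))"
    by (rule sum.cong) (auto simp: of_nat_diff)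
  finally show ?thesis by simp
qed

lemma rec_windows: "(\<Sum>l<k. \<Sum>x\<in>{a - int l..b - int l}. f x) = (\<Sum>x\<in>{a+1..b+1}. f x)"
proof -
  have "(\<Sum>l<k. \<Sum>x\<in>{a - int l..b - int l}. f x) = (\<Sum>l<k. \<Sum>x\<in>{a..b}. f (x - int l))"
  proof (rule sum.cong)
    fix l assume "l \<in> {..<k}"
    show "(\<Sum>x\<in>{a - int l..b - int l}. f x) = (\<Sum>x\<in>{a..b}. f (x - int l))"
      using sum_shift_int[of f "a - int l" "b - int l" "int l"] by simp
  qed simp
  also have "\<dots> = (\<Sum>x\<in>{a..b}. \<Sum>l<k. f (x - int l))" by (rule sum.swap)
  also have "\<dots> = (\<Sum>x\<in>{a..b}. f (x + 1))" by (simp add: rec_back)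
  also have "\<dots> = (\<Sum>x\<in>{a+1..b+1}. f x)" using sum_shift_int[of "\<lambda>x. f (x+1)" a b 1] by simp
  finally show ?thesis .
qed

end

lemma mult_entry: "A \<in> carrier_mat k k \<Longrightarrow> B \<in> carrier_mat k k \<Longrightarrow> i < k \<Longrightarrow> j < k \<Longrightarrow>
   (A * B) $$ (i, j) = (\<Sum>l<k. A $$ (i, l) * B $$ (l, j))"
  by (simp add: scalar_prod_def lessThan_atLeast0)

lemma Q_carrier: "Qmat k \<in> carrier_mat k k" by (simp add: Qmat_def)
lemma L_carrier: "lucas_mat k n \<in> carrier_mat k k" by (simp add: lucas_mat_def)

context
  fixes k :: nat
  assumes R: "\<And>n. gen_lucas k (n + int k) = (\<Sum>j<k. gen_lucas k (n + int j))"
    and k2: "k \<ge> 2"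
begin

lemma QL: "Qmat k * lucas_mat k n = lucas_mat k (n + 1)"
proof (rule eq_matI)
  fix i j assume i: "i < dim_row (lucas_mat k (n + 1))" and j: "j < dim_col (lucas_mat k (n + 1))"
  then have ik: "i < k" and jk: "j < k" by (auto simp: lucas_mat_def)
  let ?l = "gen_lucas k"
  have e: "(Qmat k * lucas_mat k n) $$ (i, j) =
     (\<Sum>l<k. Qmat k $$ (i, l) * lucas_mat k n $$ (l, j))"
    by (rule mult_entry[OF Q_carrier L_carrier ik jk])
  show "(Qmat k * lucas_mat k n) $$ (i, j) = lucas_mat k (n + 1) $$ (i, j)"
  proof (cases "i = 0")
    case True
    have "(Qmat k * lucas_mat k n) $$ (i, j) = (\<Sum>l<k. lucas_mat k n $$ (l, j))"
      unfolding e using True by (intro sum.cong) (auto simp: Qmat_def)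
    also have "\<dots> = lucas_mat k (n + 1) $$ (i, j)"
    proof (cases "j = 0")
      case True
      have "(\<Sum>l<k. lucas_mat k n $$ (l, j)) = (\<Sum>l<k. ?l ((int k + n - 1) - int l))"
        using True jk by (intro sum.cong) (auto simp: lucas_mat_def algebra_simps)
      also have "\<dots> = ?l (int k + n)" using rec_back[of ?l k "int k + n - 1", OF R] by simp
      finally show ?thesis using True \<open>i = 0\<close> ik jk by (simp add: lucas_mat_def add.commute)
    next
      case False
      have "(\<Sum>l<k. lucas_mat k n $$ (l, j)) =
           (\<Sum>l<k. \<Sum>m\<in>{(n + int j - 1) - int l .. (int k + n - 2) - int l}. ?l m)"
        using False jk by (intro sum.cong) (auto simp: lucas_mat_def algebra_simps)
      also have "\<dots> = (\<Sum>m\<in>{(n + int j - 1) + 1 .. (int k + n - 2) + 1}. ?l m)"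
        by (rule rec_windows[of ?l k, OF R])
      finally show ?thesis using False \<open>i = 0\<close> ik jk by (simp add: lucas_mat_def algebra_simps)
    qed
    finally show ?thesis .
  next
    case False
    have "(Qmat k * lucas_mat k n) $$ (i, j) = (\<Sum>l<k. if l = i - 1 then lucas_mat k n $$ (l, j) else 0)"
      unfolding e using False ik by (intro sum.cong) (auto simp: Qmat_def)
    also have "\<dots> = lucas_mat k n $$ (i - 1, j)" using ik by simp
    also have "\<dots> = lucas_mat k (n + 1) $$ (i, j)"
      using False ik jk by (simp add: lucas_mat_def of_nat_diff algebra_simps)
    finally show ?thesis .
  qed
qed (auto simp: lucas_mat_def Qmat_def)

lemma LQ: "lucas_mat k n * Qmat k = lucas_mat k (n + 1)"
proof (rule eq_matI)
  fix i j assume i: "i < dim_row (lucas_mat k (n + 1))" and j: "j < dim_col (lucas_mat k (n + 1))"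
  then have ik: "i < k" and jk: "j < k" by (auto simp: lucas_mat_def)
  let ?l = "gen_lucas k"
  let ?L = "lucas_mat k n"
  have "(?L * Qmat k) $$ (i, j) = (\<Sum>l<k. ?L $$ (i, l) * Qmat k $$ (l, j))"
    by (rule mult_entry[OF L_carrier Q_carrier ik jk])
  also have "\<dots> = (\<Sum>l<k. (if l = 0 then ?L $$ (i, l) else 0) + (if l = j + 1 then ?L $$ (i, l) else 0))"
    using jk by (intro sum.cong) (auto simp: Qmat_def)
  also have "\<dots> = ?L $$ (i, 0) + (if j + 1 < k then ?L $$ (i, j + 1) else 0)"
    using k2 by (simp add: sum.distrib)
  also have "\<dots> = lucas_mat k (n + 1) $$ (i, j)"
  proof (cases "j = 0")
    case True
    have "?L $$ (i, 0) + ?L $$ (i, 1) =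
       ?l (n - int i - 1 + 1 + int k - 1) + (\<Sum>m\<in>{n - int i - 1 + 1 .. n - int i - 1 + 1 + int k - 2}. ?l m)"
      using ik k2 by (simp add: lucas_mat_def algebra_simps)
    also have "\<dots> = (\<Sum>m\<in>{n - int i .. n - int i + int k - 1}. ?l m)"
      using sum_top_int[of "n - int i" "n - int i + int k - 2" ?l] k2 by (simp add: algebra_simps)
    also have "\<dots> = ?l (n - int i + int k)" by (rule rec_window[of ?l k, OF R])
    finally show ?thesis using True k2 ik by (simp add: lucas_mat_def algebra_simps)
  next
    case False
    show ?thesis
    proof (cases "j + 1 < k")
      case True
      have "?L $$ (i, 0) + ?L $$ (i, j + 1) =
         ?l (int k + n - int i - 2 + 1) + (\<Sum>m\<in>{n - int i + int j .. int k + n - int i - 2}. ?l m)"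
        using ik True by (simp add: lucas_mat_def algebra_simps)
      also have "\<dots> = (\<Sum>m\<in>{n - int i + int j .. int k + n - int i - 2 + 1}. ?l m)"
        using sum_top_int[of "n - int i + int j" "int k + n - int i - 2" ?l] True by (simp add: algebra_simps)
      finally show ?thesis using True False ik by (simp add: lucas_mat_def algebra_simps)
    next
      case F2: False
      then have "j = k - 1" using jk by simp
      then show ?thesis using F2 False ik jk k2 by (simp add: lucas_mat_def algebra_simps of_nat_diff)
    qed
  qed
  finally show "(?L * Qmat k) $$ (i, j) = lucas_mat k (n + 1) $$ (i, j)" .
qed (auto simp: lucas_mat_def Qmat_def)

end

lemma pow_comm:
  assumes A: "A \<in> carrier_mat n n" and B: "B \<in> carrier_mat n n" and c: "A * B = B * A"
  shows "A ^\<^sub>m m * B = B * A ^\<^sub>m m"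
proof (induction m)
  case 0 then show ?case using A B by simp
next
  case (Suc m)
  have P: "A ^\<^sub>m m \<in> carrier_mat n n" using A by simp
  have "A ^\<^sub>m Suc m * B = A ^\<^sub>m m * (A * B)" using assoc_mult_mat[OF P A B] by simp
  also have "\<dots> = A ^\<^sub>m m * (B * A)" using c by simp
  also have "\<dots> = (A ^\<^sub>m m * B) * A" using assoc_mult_mat[OF P B A] by simp
  also have "\<dots> = (B * A ^\<^sub>m m) * A" using Suc by simp
  also have "\<dots> = B * A ^\<^sub>m Suc m" using assoc_mult_mat[OF B P A] by simp
  finally show ?case .
qed

lemma pow_mult_comm:
  assumes A: "A \<in> carrier_mat n n" and B: "B \<in> carrier_mat n n" and c: "A * B = B * A"
  shows "(A * B) ^\<^sub>m m = A ^\<^sub>m m * B ^\<^sub>m m"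
proof (induction m)
  case 0 then show ?case using A B by simp
next
  case (Suc m)
  have P: "A ^\<^sub>m m \<in> carrier_mat n n" "B ^\<^sub>m m \<in> carrier_mat n n" using A B by auto
  have "(A * B) ^\<^sub>m Suc m = (A ^\<^sub>m m * B ^\<^sub>m m) * (A * B)" using Suc by simp
  also have "\<dots> = A ^\<^sub>m m * (B ^\<^sub>m m * A) * B"
    by (simp add: assoc_mult_mat[OF P(1) P(2) mult_carrier_mat[OF A B]] assoc_mult_mat[OF P(1) mult_carrier_mat[OF P(2) A] B] assoc_mult_mat[OF P(2) A B])
  also have "\<dots> = A ^\<^sub>m m * (A * B ^\<^sub>m m) * B" using pow_comm[OF B A c[symmetric]] by simp
  also have "\<dots> = A ^\<^sub>m Suc m * B ^\<^sub>m Suc m"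
    by (simp add: assoc_mult_mat[OF P(1) mult_carrier_mat[OF A P(2)] B] assoc_mult_mat[OF A P(2) B] assoc_mult_mat[OF P(1) A mult_carrier_mat[OF P(2) B]])
  finally show ?case .
qed

theorem theorem3:
  fixes k n :: nat
  assumes "k \<ge> 2" and "n \<ge> 1"
  shows "lucas_mat k 1 ^\<^sub>m n = lucas_mat k (int n) * lucas_mat k 0 ^\<^sub>m (n - 1)"
proof -
  have R: "\<And>m. gen_lucas k (m + int k) = (\<Sum>j<k. gen_lucas k (m + int j))"
    using gen_lucas_rec assms(1) by simp
  let ?Q = "Qmat k" and ?L = "lucas_mat k"
  have Qc: "?Q \<in> carrier_mat k k" by (rule Q_carrier)
  have Lc: "\<And>m. ?L m \<in> carrier_mat k k" by (rule L_carrier)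
  have comm: "?Q * ?L 0 = ?L 0 * ?Q" using QL[OF R assms(1)] LQ[OF R assms(1)] by simp
  have L1: "?L 1 = ?Q * ?L 0" using QL[OF R assms(1), of 0] by simp
  have Ln: "?L (int m) = ?Q ^\<^sub>m m * ?L 0" for m
  proof (induction m)
    case 0 then show ?case using Lc[of 0] by (simp add: Qmat_def)
  next
    case (Suc m)
    have "?L (int (Suc m)) = ?Q * ?L (int m)" using QL[OF R assms(1), of "int m"] by (simp add: add.commute)
    also have "\<dots> = (?Q * ?Q ^\<^sub>m m) * ?L 0" using Suc assoc_mult_mat[OF Qc pow_carrier_mat[OF Qc] Lc, of m 0] by simp
    also have "\<dots> = ?Q ^\<^sub>m Suc m * ?L 0" using pow_comm[OF Qc Qc refl, of m] by simp
    finally show ?case .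
  qed
  obtain p where p: "n = Suc p" using assms(2) by (cases n) auto
  have "?L 1 ^\<^sub>m n = ?Q ^\<^sub>m n * ?L 0 ^\<^sub>m n" unfolding L1 by (rule pow_mult_comm[OF Qc Lc comm])
  also have "?L 0 ^\<^sub>m n = ?L 0 * ?L 0 ^\<^sub>m p" using p pow_comm[OF Lc[of 0] Lc[of 0] refl, of p] by simp
  also have "?Q ^\<^sub>m n * (?L 0 * ?L 0 ^\<^sub>m p) = (?Q ^\<^sub>m n * ?L 0) * ?L 0 ^\<^sub>m p"
    using assoc_mult_mat[OF pow_carrier_mat[OF Qc] Lc[of 0] pow_carrier_mat[OF Lc[of 0]], of n p] by simp
  also have "\<dots> = ?L (int n) * ?L 0 ^\<^sub>m (n - 1)" using Ln[of n] p by simp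
  finally show ?thesis .
qed

end
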